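(* Let $V$ be a finite dimensional normed vector space and let $(V,H_i,L_i)$ be holonomic spaces such that the family $\{H_i\}$ is of finite representation type and the holonomic metrics $d_{L_i}$ converge uniformly on compact sets to a semi-metric $d_\infty$ on $V$. Then there exists a closed subgroup $G\le O(V)$ such that for all $u,v\in V$, $d_\infty(u,v)=0$ if and only if $v=gu$ for some $g\in G$.
   Context: $O(V)$ is the group of norm-preserving linear maps of $V$. A group-norm on $H$ is $L:H\to\mathbb{R}$ with $L(a)\ge0$, $L(a)=0$ iff $a=e$, $L(a^{-1})=L(a)$, $L(ab)\le L(a)+L(b)$. A holonomic space is $(V,H,L)$ with $H\le O(V)$, $L$ a group-norm, such that for every $u\in V$ there is $R>0$ with $\|v-w\|^2-\|av-w\|^2\le L(a)^2$ for all $a\in H$ and $\|u-v\|,\|u-w\|<R$; its holonomic metric is $d_L(u,v)=\inf_{a\in H}\sqrt{L(a)^2+\|au-v\|^2}$. A family $\{H_i\}$ of subgroups of $O(V)$ is of finite representation type if there are finitely many subgroups $K_1,\dots,K_n\le O(V)$ such that each $H_i$ equals $\phi^{-1}K_j\phi$ for some $j$ and some $\phi\in O(V)$. *)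

theory Defs
  imports "HOL-Analysis.Analysis"
begin

definition fin_dim_space :: "'a::real_normed_vector itself \<Rightarrow> bool" where
  "fin_dim_space _ \<longleftrightarrow> (\<exists>B::'a set. finite B \<and> span B = UNIV)"

definition orth_maps :: "('a::real_normed_vector \<Rightarrow> 'a) set" where
  "orth_maps = {f. linear f \<and> (\<forall>x. norm (f x) = norm x)}"

definition subgroup_O :: "('a::real_normed_vector \<Rightarrow> 'a) set \<Rightarrow> bool" where
  "subgroup_O H \<longleftrightarrow> H \<subseteq> orth_maps \<and> id \<in> H \<and>
     (\<forall>a\<in>H. \<forall>b\<in>H. a \<circ> b \<in> H) \<and> (\<forall>a\<in>H. inv a \<in> H)"

definition group_norm :: "('a \<Rightarrow> 'a) set \<Rightarrow> (('a \<Rightarrow> 'a) \<Rightarrow> real) \<Rightarrow> bool" where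
  "group_norm H L \<longleftrightarrow>
     (\<forall>a\<in>H. L a \<ge> 0) \<and> (\<forall>a\<in>H. L a = 0 \<longleftrightarrow> a = id) \<and>
     (\<forall>a\<in>H. L (inv a) = L a) \<and> (\<forall>a\<in>H. \<forall>b\<in>H. L (a \<circ> b) \<le> L a + L b)"

definition holonomic_space :: "('a::real_normed_vector \<Rightarrow> 'a) set \<Rightarrow> (('a \<Rightarrow> 'a) \<Rightarrow> real) \<Rightarrow> bool" where
  "holonomic_space H L \<longleftrightarrow> subgroup_O H \<and> group_norm H L \<and>
     (\<forall>u. \<exists>R>0. \<forall>a\<in>H. \<forall>v w. norm (u - v) < R \<and> norm (u - w) < R \<longrightarrow>
         (norm (v - w))\<^sup>2 - (norm (a v - w))\<^sup>2 \<le> (L a)\<^sup>2)"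

definition holonomic_metric :: "('a::real_normed_vector \<Rightarrow> 'a) set \<Rightarrow> (('a \<Rightarrow> 'a) \<Rightarrow> real) \<Rightarrow> 'a \<Rightarrow> 'a \<Rightarrow> real" where
  "holonomic_metric H L u v = (INF a\<in>H. sqrt ((L a)\<^sup>2 + (norm (a u - v))\<^sup>2))"

definition finite_rep_type :: "'i set \<Rightarrow> ('i \<Rightarrow> ('a::real_normed_vector \<Rightarrow> 'a) set) \<Rightarrow> bool" where
  "finite_rep_type I Hs \<longleftrightarrow> (\<exists>Ks. finite Ks \<and> (\<forall>K\<in>Ks. subgroup_O K) \<and>
     (\<forall>i\<in>I. \<exists>K\<in>Ks. \<exists>\<phi>\<in>orth_maps. Hs i = (\<lambda>k. inv \<phi> \<circ> k \<circ> \<phi>) ` K))"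

definition semi_metric :: "('a \<Rightarrow> 'a \<Rightarrow> real) \<Rightarrow> bool" where
  "semi_metric d \<longleftrightarrow> (\<forall>u v. d u v \<ge> 0) \<and> (\<forall>u. d u u = 0) \<and> (\<forall>u v. d u v = d v u)"

end

theory Submission imports Defs begin

lemma compact_span_cball:
  fixes B :: "'a::real_normed_vector set"
  assumes "finite B" shows "\<forall>e. compact (span B \<inter> cball 0 e)"
  using assms
proof (induction B rule: finite_induct)
  case empty
  show ?case
  proof
    fix e :: real
    have "span {} \<inter> cball (0::'a) e \<subseteq> {0}" by auto
    then have "finite (span {} \<inter> cball (0::'a) e)" using finite_subset by blast
    then show "compact (span {} \<inter> cball (0::'a) e)" by (rule finite_imp_compact)
  qed
next
  case (insert b B)
  have cl: "closed (span B)"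
  proof -
    have "closure (span B) \<subseteq> span B"
    proof
      fix x assume x: "x \<in> closure (span B)"
      let ?K = "span B \<inter> cball 0 (norm x + 1)"
      have "x \<in> closure ?K"
        unfolding closure_approachable
      proof (intro allI impI)
        fix e :: real assume e: "e > 0"
        obtain y where y: "y \<in> span B" "dist y x < min e 1"
          using x e unfolding closure_approachable by (meson less_numeral_extra(1) min_less_iff_conj)
        have "norm y \<le> norm x + 1"
          using y(2) by (metis add_le_cancel_left dist_commute dist_norm min_less_iff_conj norm_triangle_sub order.strict_implies_order order_trans norm_minus_commute add.commute le_less_trans less_imp_le)
        then show "\<exists>y\<in>?K. dist y x < e" using y by auto
      qed
      then show "x \<in> span B"
        using insert.IH compact_imp_closed closure_closed by blast
    qed
    then show ?thesis by (simp add: closure_subset_eq)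
  qed
  show ?case
  proof (cases "b \<in> span B")
    case True
    then show ?thesis using insert.IH span_redundant by metis
  next
    case False
    define \<delta> where "\<delta> = infdist b (span B)"
    have dpos: "\<delta> > 0" unfolding \<delta>_def
      using infdist_pos_not_in_closed[OF cl _ False] span_zero by blast
    have key: "\<bar>t\<bar> * \<delta> \<le> norm (y + t *\<^sub>R b)" if "y \<in> span B" for y t
    proof (cases "t = 0")
      case True then show ?thesis by simp
    next
      case False
      have m: "- ((1/t) *\<^sub>R y) \<in> span B" using that by (simp add: span_neg span_scale)
      have "\<delta> \<le> dist b (- ((1/t) *\<^sub>R y))" unfolding \<delta>_def using infdist_le[OF m] .
      also have "\<dots> = norm (b + (1/t) *\<^sub>R y)" by (simp add: dist_norm)
      finally have "\<bar>t\<bar> * \<delta> \<le> \<bar>t\<bar> * norm (b + (1/t) *\<^sub>R y)"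
        by (simp add: mult_left_mono)
      also have "\<dots> = norm (t *\<^sub>R (b + (1/t) *\<^sub>R y))" by simp
      also have "t *\<^sub>R (b + (1/t) *\<^sub>R y) = y + t *\<^sub>R b"
        using False by (simp add: algebra_simps)
      finally show ?thesis .
    qed
    show ?thesis
    proof
      fix e :: real
      define T where "T = e / \<delta>"
      define M where "M = e + T * norm b"
      define K where "K = (\<lambda>(y, t). y + t *\<^sub>R b) ` ((span B \<inter> cball 0 M) \<times> {-T..T})"
      have cK: "compact K" unfolding K_def
        by (intro compact_continuous_image compact_Times insert.IH[rule_format] compact_Icc)
           (auto intro!: continuous_intros simp: case_prod_unfold)
      have eq: "span (insert b B) \<inter> cball 0 e = K \<inter> cball 0 e"
      proof
        show "span (insert b B) \<inter> cball 0 e \<subseteq> K \<inter> cball 0 e"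
        proof
          fix x assume x: "x \<in> span (insert b B) \<inter> cball 0 e"
          then obtain t where t: "x - t *\<^sub>R b \<in> span B" unfolding span_insert by auto
          define y where "y = x - t *\<^sub>R b"
          have xy: "x = y + t *\<^sub>R b" unfolding y_def by simp
          have nx: "norm x \<le> e" using x by auto
          have "\<bar>t\<bar> * \<delta> \<le> norm (x - t *\<^sub>R b + t *\<^sub>R b)" using key[OF t] .
          then have "\<bar>t\<bar> * \<delta> \<le> e" using nx by simp
          then have tT: "\<bar>t\<bar> \<le> T" unfolding T_def using dpos by (simp add: pos_le_divide_eq)
          have "norm y \<le> norm x + norm (t *\<^sub>R b)" unfolding y_def by (rule norm_triangle_ineq4)
          also have "\<dots> \<le> e + T * norm b" using nx tT mult_right_mono[OF tT norm_ge_zero[of b]] by simp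
          finally have "norm y \<le> M" unfolding M_def .
          then have "(y, t) \<in> (span B \<inter> cball 0 M) \<times> {-T..T}"
            using t tT by (auto simp: y_def)
          then have "x \<in> K" unfolding K_def using xy by force
          then show "x \<in> K \<inter> cball 0 e" using x by auto
        qed
        show "K \<inter> cball 0 e \<subseteq> span (insert b B) \<inter> cball 0 e"
        proof
          fix x assume "x \<in> K \<inter> cball 0 e"
          then obtain y t where "y \<in> span B" "x = y + t *\<^sub>R b" "x \<in> cball 0 e"
            unfolding K_def by auto
          moreover have "y \<in> span (insert b B)" using \<open>y \<in> span B\<close> span_mono[of B "insert b B"] by auto
          moreover have "b \<in> span (insert b B)" by (simp add: span_base)
          ultimately show "x \<in> span (insert b B) \<inter> cball 0 e"
            by (simp add: span_add span_scale)
        qed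
      qed
      show "compact (span (insert b B) \<inter> cball 0 e)" unfolding eq
        using cK by (simp add: compact_Int_closed)
    qed
  qed
qed


lemma fd_bw:
  fixes x :: "nat \<Rightarrow> 'a::real_normed_vector" and B :: "'a set"
  assumes "finite B" "span B = UNIV" "\<And>k. norm (x k) \<le> e"
  obtains l r where "strict_mono r" "(x \<circ> r) \<longlonglongrightarrow> l"
proof -
  have "compact (cball (0::'a) e)" using compact_span_cball[OF assms(1)] assms(2) by auto
  then have "seq_compact (cball (0::'a) e)" using compact_imp_seq_compact by blast
  then show ?thesis using that assms(3) unfolding seq_compact_def by (metis mem_cball_0)
qed

lemma diag:
  fixes x :: "nat \<Rightarrow> 'i \<Rightarrow> 'a::real_normed_vector" and B :: "'a set"
  assumes "finite B" "span B = UNIV" "finite S" "\<And>k s. s \<in> S \<Longrightarrow> norm (x k s) \<le> e s"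
  shows "\<exists>r l. strict_mono r \<and> (\<forall>s\<in>S. (\<lambda>k. x (r k) s) \<longlonglongrightarrow> l s)"
  using assms(3,4)
proof (induction S rule: finite_induct)
  case empty
  show ?case by (rule exI[of _ id]) (auto simp: strict_mono_def)
next
  case (insert s S)
  then obtain r l where r: "strict_mono r" "\<forall>s\<in>S. (\<lambda>k. x (r k) s) \<longlonglongrightarrow> l s" by auto
  have bnd: "\<And>k. norm (x (r k) s) \<le> e s" using insert.prems by auto
  obtain l' r' where r': "strict_mono r'" "((\<lambda>k. x (r k) s) \<circ> r') \<longlonglongrightarrow> l'"
    by (rule fd_bw[OF assms(1,2) bnd])
  have "strict_mono (r \<circ> r')" using r(1) r'(1) by (simp add: strict_mono_o)
  moreover have "\<forall>s'\<in>insert s S. (\<lambda>k. x ((r \<circ> r') k) s') \<longlonglongrightarrow> (l(s := l')) s'"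
  proof
    fix s' assume s': "s' \<in> insert s S"
    show "(\<lambda>k. x ((r \<circ> r') k) s') \<longlonglongrightarrow> (l(s := l')) s'"
    proof (cases "s' = s")
      case True then show ?thesis using r'(2) by (simp add: o_def)
    next
      case False
      then have "s' \<in> S" using s' by auto
      then have "((\<lambda>k. x (r k) s') \<circ> r') \<longlonglongrightarrow> l s'" by (rule LIMSEQ_subseq_LIMSEQ[OF r(2)[rule_format] r'(1)])
      then show ?thesis using False by (simp add: o_def)
    qed
  qed
  ultimately show ?case by blast
qed

lemma fin_dim_basis:
  assumes "fin_dim_space TYPE('a)"
  obtains B :: "'a::real_normed_vector set" where "finite B" "independent B" "span B = UNIV"
proof -
  obtain B0 :: "'a set" where B0: "finite B0" "span B0 = UNIV" using assms unfolding fin_dim_space_def by blast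
  obtain B where B: "B \<subseteq> B0" "independent B" "B0 \<subseteq> span B" using maximal_independent_subset by blast
  have "span B = UNIV" using B(3) B0(2) by (metis span_minimal subspace_span top.extremum_uniqueI)
  then show ?thesis using that B finite_subset B0(1) by blast
qed

lemma orth_bij:
  assumes "fin_dim_space TYPE('a::real_normed_vector)" "g \<in> (orth_maps :: ('a \<Rightarrow> 'a) set)"
  shows "bij g" "inv g \<in> orth_maps"
proof -
  obtain B :: "'a set" where B: "finite B" "independent B" "span B = UNIV" using fin_dim_basis[OF assms(1)] by blast
  interpret fd: finite_dimensional_vector_space "scaleR :: real \<Rightarrow> 'a \<Rightarrow> 'a" B
    rewrites "module.dependent (*\<^sub>R) = dependent"
    and "module.span (*\<^sub>R) = span"
    and "Vector_Spaces.linear (*\<^sub>R) (*\<^sub>R) = linear"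
    using B by (unfold_locales) (auto simp: dependent_raw_def span_raw_def linear_def real_scaleR_def[abs_def])
  have lg: "linear g" and ng: "\<And>x. norm (g x) = norm x" using assms(2) unfolding orth_maps_def by auto
  have "inj g"
  proof (rule injI)
    fix x y assume "g x = g y"
    then have "g (x - y) = 0" using lg by (simp add: linear_diff)
    then have "norm (x - y) = 0" using ng by (metis norm_zero)
    then show "x = y" by simp
  qed
  moreover have "surj g" using fd.linear_inj_imp_surj[OF lg \<open>inj g\<close>] .
  ultimately show "bij g" by (simp add: bij_def)
  have "linear (inv g)" using fd.inj_linear_imp_inv_linear[OF lg \<open>inj g\<close>] .
  moreover have "norm (inv g x) = norm x" for x using ng[of "inv g x"] \<open>surj g\<close> by (simp add: surj_f_inv_f)
  ultimately show "inv g \<in> orth_maps" unfolding orth_maps_def by auto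
qed

lemma orth_subseq:
  fixes a :: "nat \<Rightarrow> 'a::real_normed_vector \<Rightarrow> 'a"
  assumes "fin_dim_space TYPE('a)" "\<And>k. a k \<in> (orth_maps :: ('a \<Rightarrow> 'a) set)"
  shows "\<exists>g r. g \<in> orth_maps \<and> strict_mono r \<and> (\<forall>w. (\<lambda>k. a (r k) w) \<longlonglongrightarrow> g w)"
proof -
  obtain B :: "'a set" where B: "finite B" "independent B" "span B = UNIV" using fin_dim_basis[OF assms(1)] by blast
  have la: "linear (a k)" and na: "\<And>x. norm (a k x) = norm x" for k using assms(2)[of k] unfolding orth_maps_def by auto
  obtain r l where r: "strict_mono r" "\<forall>b\<in>B. (\<lambda>k. a (r k) b) \<longlonglongrightarrow> l b"
    using diag[OF B(1) B(3) B(1), of "\<lambda>k b. a k b" norm] na by auto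
  have conv: "convergent (\<lambda>k. a (r k) w)" for w
  proof -
    have "w \<in> span B" using B(3) by auto
    then obtain c where w: "w = (\<Sum>b\<in>B. c b *\<^sub>R b)" using span_finite[OF B(1)] by auto
    have "(\<lambda>k. a (r k) w) = (\<lambda>k. \<Sum>b\<in>B. c b *\<^sub>R a (r k) b)"
      unfolding w using la by (simp add: linear_sum linear_scale)
    moreover have "(\<lambda>k. \<Sum>b\<in>B. c b *\<^sub>R a (r k) b) \<longlonglongrightarrow> (\<Sum>b\<in>B. c b *\<^sub>R l b)"
      using r(2) by (intro tendsto_intros) auto
    ultimately show ?thesis unfolding convergent_def by auto
  qed
  define g where "g w = lim (\<lambda>k. a (r k) w)" for w
  have gl: "(\<lambda>k. a (r k) w) \<longlonglongrightarrow> g w" for w using conv[of w] unfolding g_def by (simp add: convergent_LIMSEQ_iff)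
  have "linear g"
  proof (rule linearI)
    fix x y
    have "(\<lambda>k. a (r k) (x + y)) \<longlonglongrightarrow> g x + g y"
      using tendsto_add[OF gl[of x] gl[of y]] la by (simp add: linear_add)
    then show "g (x + y) = g x + g y" using gl[of "x+y"] LIMSEQ_unique by blast
  next
    fix c :: real and x
    have "(\<lambda>k. a (r k) (c *\<^sub>R x)) \<longlonglongrightarrow> c *\<^sub>R g x"
      using tendsto_scaleR[OF tendsto_const[of c] gl[of x]] la by (simp add: linear_scale)
    then show "g (c *\<^sub>R x) = c *\<^sub>R g x" using gl[of "c *\<^sub>R x"] LIMSEQ_unique by blast
  qed
  moreover have "norm (g x) = norm x" for x
  proof -
    have "(\<lambda>k. norm (a (r k) x)) \<longlonglongrightarrow> norm (g x)" using tendsto_norm[OF gl[of x]] .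
    then show ?thesis using na by (simp add: LIMSEQ_const_iff)
  qed
  ultimately have "g \<in> orth_maps" unfolding orth_maps_def by auto
  then show ?thesis apply - apply (rule exI[of _ g], rule exI[of _ r]) using r(1) gl by simp
qed


lemma hs_facts:
  assumes "holonomic_space H L"
  shows "id \<in> H" "\<And>a. a \<in> H \<Longrightarrow> a \<in> orth_maps" "\<And>a b. a \<in> H \<Longrightarrow> b \<in> H \<Longrightarrow> a \<circ> b \<in> H"
    "\<And>a. a \<in> H \<Longrightarrow> L a \<ge> 0" "L id = 0" "\<And>a b. a \<in> H \<Longrightarrow> b \<in> H \<Longrightarrow> L (a \<circ> b) \<le> L a + L b"
  using assms unfolding holonomic_space_def subgroup_O_def group_norm_def by auto

lemma hm_le:
  assumes "holonomic_space H L" "a \<in> H"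
  shows "holonomic_metric H L u v \<le> sqrt ((L a)\<^sup>2 + (norm (a u - v))\<^sup>2)"
  unfolding holonomic_metric_def
  by (rule cINF_lower[OF bdd_belowI2[of _ 0] assms(2)]) simp

lemma hm_ge:
  assumes "holonomic_space H L" "\<And>a. a \<in> H \<Longrightarrow> m \<le> sqrt ((L a)\<^sup>2 + (norm (a u - v))\<^sup>2)"
  shows "m \<le> holonomic_metric H L u v"
  unfolding holonomic_metric_def
  by (rule cINF_greatest) (use assms hs_facts(1)[OF assms(1)] in auto)

lemma hm_nonneg:
  assumes "holonomic_space H L" shows "0 \<le> holonomic_metric H L u v"
  by (rule hm_ge[OF assms]) simp

lemma hm_norm:
  assumes "holonomic_space H L" shows "holonomic_metric H L u v \<le> norm (u - v)"
  using hm_le[OF assms hs_facts(1)[OF assms], of u v] hs_facts(5)[OF assms] by simp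

lemma cmod_mono:
  fixes x y X Y :: real
  assumes "0 \<le> x" "x \<le> X" "0 \<le> y" "y \<le> Y"
  shows "sqrt (x\<^sup>2 + y\<^sup>2) \<le> sqrt (X\<^sup>2 + Y\<^sup>2)"
  using assms by (intro real_sqrt_le_mono add_mono power_mono) auto

lemma minkowski2:
  fixes x1 y1 x2 y2 :: real
  shows "sqrt ((x1 + x2)\<^sup>2 + (y1 + y2)\<^sup>2) \<le> sqrt (x1\<^sup>2 + y1\<^sup>2) + sqrt (x2\<^sup>2 + y2\<^sup>2)"
proof -
  have "cmod (Complex x1 y1 + Complex x2 y2) \<le> cmod (Complex x1 y1) + cmod (Complex x2 y2)"
    by (rule norm_triangle_ineq)
  moreover have "Complex x1 y1 + Complex x2 y2 = Complex (x1 + x2) (y1 + y2)" by (simp add: complex_eq_iff)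
  ultimately show ?thesis by (simp add: complex_norm)
qed

lemma hm_tri:
  assumes hs: "holonomic_space H L"
  shows "holonomic_metric H L u w \<le> holonomic_metric H L u v + holonomic_metric H L v w"
proof -
  let ?f = "\<lambda>a. sqrt ((L a)\<^sup>2 + (norm (a u - v))\<^sup>2)"
  let ?g = "\<lambda>b. sqrt ((L b)\<^sup>2 + (norm (b v - w))\<^sup>2)"
  have main: "holonomic_metric H L u w \<le> ?f a + ?g b" if a: "a \<in> H" and b: "b \<in> H" for a b
  proof -
    have ba: "b \<circ> a \<in> H" using hs_facts(3)[OF hs b a] .
    have lb: "linear b" and nb: "\<And>x. norm (b x) = norm x" using hs_facts(2)[OF hs b] unfolding orth_maps_def by auto
    have "norm (b (a u) - w) \<le> norm (b (a u) - b v) + norm (b v - w)" using norm_triangle_ineq[of "b (a u) - b v" "b v - w"] by simp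
    also have "b (a u) - b v = b (a u - v)" using lb by (simp add: linear_diff)
    finally have n1: "norm (b (a u) - w) \<le> norm (a u - v) + norm (b v - w)" using nb by simp
    have "holonomic_metric H L u w \<le> sqrt ((L (b \<circ> a))\<^sup>2 + (norm ((b \<circ> a) u - w))\<^sup>2)"
      by (rule hm_le[OF hs ba])
    also have "\<dots> \<le> sqrt ((L a + L b)\<^sup>2 + (norm (a u - v) + norm (b v - w))\<^sup>2)"
      using n1 hs_facts(4)[OF hs ba] hs_facts(6)[OF hs b a]
      by (intro cmod_mono) auto
    also have "\<dots> \<le> ?f a + ?g b" by (rule minkowski2)
    finally show ?thesis .
  qed
  have "holonomic_metric H L u w - ?g b \<le> holonomic_metric H L u v" if b: "b \<in> H" for b
    by (rule hm_ge[OF hs]) (use main b in force)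
  then have "holonomic_metric H L u w - holonomic_metric H L u v \<le> holonomic_metric H L v w"
    by (intro hm_ge[OF hs]) force
  then show ?thesis by simp
qed


lemma closed_orth: "closed (orth_maps :: ('a::real_normed_vector \<Rightarrow> 'a) set)"
proof -
  have eq: "(orth_maps :: ('a \<Rightarrow> 'a) set) = (\<Inter>x. \<Inter>y. {f. f (x + y) = f x + f y}) \<inter> (\<Inter>c. \<Inter>x. {f. f (c *\<^sub>R x) = c *\<^sub>R f x})
      \<inter> (\<Inter>x. {f. norm (f x) = norm x})"
    unfolding orth_maps_def linear_iff by auto
  have c: "\<And>x. continuous_on UNIV (\<lambda>f::'a \<Rightarrow> 'a. f x)" by simp
  show ?thesis unfolding eq
    by (intro closed_Int closed_INT ballI closed_Collect_eq continuous_intros c)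
qed

theorem mainTheorem15:
  fixes Hs :: "nat \<Rightarrow> ('a::real_normed_vector \<Rightarrow> 'a) set"
    and Ls :: "nat \<Rightarrow> ('a \<Rightarrow> 'a) \<Rightarrow> real"
    and dinf :: "'a \<Rightarrow> 'a \<Rightarrow> real"
  assumes "fin_dim_space TYPE('a)"
    and "\<And>i. holonomic_space (Hs i) (Ls i)"
    and "finite_rep_type UNIV Hs"
    and "semi_metric dinf"
    and "\<And>C. compact C \<Longrightarrow>
           uniform_limit (C \<times> C) (\<lambda>i (u, v). holonomic_metric (Hs i) (Ls i) u v)
             (\<lambda>(u, v). dinf u v) sequentially"
  shows "\<exists>G. subgroup_O G \<and> closed G \<and>
           (\<forall>u v. dinf u v = 0 \<longleftrightarrow> (\<exists>g\<in>G. v = g u))"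
proof -
  note hs = assms(2)
  define d where "d i = holonomic_metric (Hs i) (Ls i)" for i
  have conv: "(\<lambda>i. d i u v) \<longlonglongrightarrow> dinf u v" for u v
  proof -
    have "compact {u, v}" by simp
    from tendsto_uniform_limitI[OF assms(5)[OF this], of "(u, v)"]
    show ?thesis by (simp add: d_def)
  qed
  have nn: "\<And>u v. dinf u v \<ge> 0" and dd: "\<And>u. dinf u u = 0" and sy: "\<And>u v. dinf u v = dinf v u"
    using assms(4) unfolding semi_metric_def by auto
  have tri: "dinf u w \<le> dinf u v + dinf v w" for u v w
    by (rule LIMSEQ_le[OF conv tendsto_add[OF conv conv]]) (use hm_tri[OF hs] in \<open>auto simp: d_def\<close>)
  have dle: "dinf u v \<le> norm (u - v)" for u v
    by (rule LIMSEQ_le[OF conv tendsto_const]) (use hm_norm[OF hs] in \<open>auto simp: d_def\<close>)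
  have lip: "dist (dinf u x) (dinf u y) \<le> 1 * dist x y" for u x y
  proof -
    have "dinf u x \<le> dinf u y + norm (y - x)" using tri[of u x y] dle[of y x] by linarith
    moreover have "dinf u y \<le> dinf u x + norm (x - y)" using tri[of u y x] dle[of x y] by linarith
    ultimately show ?thesis by (simp add: dist_real_def dist_norm norm_minus_commute)
  qed
  have cont: "continuous_on UNIV (dinf u)" for u
    by (rule lipschitz_on_continuous_on[OF lipschitz_onI[where L=1 and X=UNIV]]) (use lip in auto)
  define G where "G = {g \<in> orth_maps. \<forall>u. dinf u (g u) = 0}"
  have sub: "subgroup_O G"
    unfolding subgroup_O_def
  proof (intro conjI ballI)
    show "G \<subseteq> orth_maps" unfolding G_def by auto
    have "id \<in> orth_maps" unfolding orth_maps_def linear_iff by simp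
    then show "id \<in> G" unfolding G_def using dd by simp
  next
    fix a b assume a: "a \<in> G" and b: "b \<in> G"
    have "a \<circ> b \<in> orth_maps" using a b unfolding G_def orth_maps_def by (auto intro: linear_compose)
    moreover have "dinf u (a (b u)) = 0" for u
    proof -
      have "dinf u (b u) = 0" "dinf (b u) (a (b u)) = 0" using a b unfolding G_def by auto
      then show ?thesis using tri[of u "a (b u)" "b u"] nn[of u "a (b u)"] by linarith
    qed
    ultimately show "a \<circ> b \<in> G" unfolding G_def by simp
  next
    fix a assume a: "a \<in> G"
    then have ao: "a \<in> orth_maps" unfolding G_def by auto
    have "bij a" "inv a \<in> orth_maps" using orth_bij[OF assms(1) ao] by auto
    moreover have "dinf u (inv a u) = 0" for u
    proof -
      have "a (inv a u) = u" using \<open>bij a\<close> by (simp add: bij_def surj_f_inv_f)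
      then have "dinf (inv a u) u = 0" using a unfolding G_def by (metis (mono_tags, lifting) mem_Collect_eq)
      then show ?thesis using sy by simp
    qed
    ultimately show "inv a \<in> G" unfolding G_def by simp
  qed
  have cl: "closed G"
  proof -
    have eq: "G = orth_maps \<inter> (\<Inter>u. {g. dinf u (g u) = 0})" unfolding G_def by auto
    have "closed {g::'a \<Rightarrow> 'a. dinf u (g u) = 0}" for u
      by (rule closed_Collect_eq[OF continuous_on_compose2[OF cont continuous_on_product_coordinates] continuous_on_const]) auto
    then show ?thesis unfolding eq by (intro closed_Int closed_orth closed_INT) auto
  qed
  have iff: "dinf u v = 0 \<longleftrightarrow> (\<exists>g\<in>G. v = g u)" for u v
  proof
    assume "\<exists>g\<in>G. v = g u" then show "dinf u v = 0" unfolding G_def by auto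
  next
    assume d0: "dinf u v = 0"
    let ?q = "\<lambda>i a. sqrt ((Ls i a)\<^sup>2 + (norm (a u - v))\<^sup>2)"
    have ex: "\<exists>a\<in>Hs i. ?q i a < d i u v + inverse (real (Suc i))" for i
    proof (rule ccontr)
      assume "\<not> ?thesis"
      then have "d i u v + inverse (real (Suc i)) \<le> d i u v"
        unfolding d_def by (intro hm_ge[OF hs]) (auto simp: not_less)
      then show False by simp
    qed
    then obtain a where a: "\<And>i. a i \<in> Hs i" "\<And>i. ?q i (a i) < d i u v + inverse (real (Suc i))"
      by metis
    define q where "q i = ?q i (a i)" for i
    have q0: "q \<longlonglongrightarrow> 0"
    proof (rule tendsto_sandwich[of "\<lambda>_. 0" _ _ "\<lambda>i. d i u v + inverse (real (Suc i))"])
      show "\<forall>\<^sub>F n in sequentially. 0 \<le> q n" unfolding q_def by simp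
      show "\<forall>\<^sub>F n in sequentially. q n \<le> d n u v + inverse (real (Suc n))"
        using a(2) unfolding q_def by (simp add: less_imp_le)
      show "(\<lambda>n. d n u v + inverse (real (Suc n))) \<longlonglongrightarrow> 0"
        using tendsto_add[OF conv[of u v] LIMSEQ_inverse_real_of_nat] d0 by simp
    qed simp
    have ao: "\<And>i. a i \<in> orth_maps" by (rule hs_facts(2)[OF hs a(1)])
    obtain g r where g: "g \<in> orth_maps" "strict_mono r" "\<And>w. (\<lambda>k. a (r k) w) \<longlonglongrightarrow> g w"
      using orth_subseq[of a, OF assms(1) ao] by blast
    have qr: "(\<lambda>k. q (r k)) \<longlonglongrightarrow> 0" using LIMSEQ_subseq_LIMSEQ[OF q0 g(2)] by (simp add: o_def)
    have L0: "(\<lambda>k. Ls (r k) (a (r k))) \<longlonglongrightarrow> 0"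
    proof (rule tendsto_sandwich[of "\<lambda>_. 0" _ _ "\<lambda>k. q (r k)"])
      show "\<forall>\<^sub>F n in sequentially. 0 \<le> Ls (r n) (a (r n))" using hs_facts(4)[OF hs a(1)] by simp
      show "\<forall>\<^sub>F n in sequentially. Ls (r n) (a (r n)) \<le> q (r n)" unfolding q_def by simp
    qed (use qr in simp_all)
    have "(\<lambda>k. a (r k) u - v) \<longlonglongrightarrow> 0"
      by (rule Lim_null_comparison[OF _ qr]) (simp add: q_def)
    then have "(\<lambda>k. a (r k) u) \<longlonglongrightarrow> v" by (rule LIM_zero_cancel)
    then have gu: "v = g u" using g(3)[of u] LIMSEQ_unique by blast
    have "dinf w (g w) = 0" for w
    proof -
      have c1: "(\<lambda>k. d (r k) w (g w)) \<longlonglongrightarrow> dinf w (g w)"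
        using LIMSEQ_subseq_LIMSEQ[OF conv g(2)] by (simp add: o_def)
      have c2: "(\<lambda>k. sqrt ((Ls (r k) (a (r k)))\<^sup>2 + (norm (a (r k) w - g w))\<^sup>2)) \<longlonglongrightarrow> sqrt (0\<^sup>2 + (norm (g w - g w))\<^sup>2)"
        by (intro tendsto_intros L0 g(3))
      have "dinf w (g w) \<le> 0"
        by (rule LIMSEQ_le[OF c1]) (use c2 in simp, use hm_le[OF hs a(1)] in \<open>auto simp: d_def\<close>)
      then show ?thesis using nn[of w "g w"] by simp
    qed
    then have "g \<in> G" unfolding G_def using g(1) by simp
    then show "\<exists>g\<in>G. v = g u" using gu by blast
  qed
  show ?thesis using sub cl iff by blast
qed

end
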